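(* Let $N\ge1$, $\sigma\ge0$, and let $(x_i(t),v_i(t))_{i=1}^N$, $t\ge0$, be a solution of $$\dot x_i=v_i,\qquad \dot v_i=-\frac{\|v_i\|^2}{\|x_i\|^2}x_i+\sum_{j=1}^N\frac{\psi_{ij}}{N}\big(R(x_j,x_i)v_j-v_i\big)+\sum_{k=1}^N\frac{\sigma}{N}\big(\|x_i\|^2x_k-\langle x_i,x_k\rangle x_i\big),$$ with initial data satisfying $\|x_i(0)\|=1$ and $\langle v_i(0),x_i(0)\rangle=0$ for all $i$, where the $\psi_{ij}$ are nonnegative bounded functions with $\psi_{ij}=\psi_{ji}$ for all $i,j$. Then $$\frac{d\mathcal{E}}{dt}=-\sum_{i,j=1}^N\frac{\psi_{ij}}{N^2}\big\|R(x_j,x_i)v_j-v_i\big\|^2,$$ and for all $t\ge0$, $$\mathcal{V}(t):=\max_{1\le i\le N}\|v_i(t)\|\le\sqrt{N\mathcal{E}(0)}.$$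
   Context: $\|\cdot\|$ is the Euclidean norm and $\langle\cdot,\cdot\rangle$ the standard inner product on $\mathbb{R}^3$. For column vectors $x_1,x_2\in\mathbb{S}^2$ with $x_1\neq -x_2$: $R(x_1,x_2)=I$ if $x_1=x_2$, and otherwise $R(x_1,x_2)=\langle x_1,x_2\rangle I-x_1x_2^T+x_2x_1^T+(1-\langle x_1,x_2\rangle)uu^T$ with $u=\frac{x_1\times x_2}{\|x_1\times x_2\|}$. When $x_j=-x_i$, the terms $\psi_{ij}R(x_j,x_i)v_j$ and $\psi_{ij}\|R(x_j,x_i)v_j-v_i\|^2$ are taken to be $0$. The energy is $\mathcal{E}=\mathcal{E}_K+\mathcal{E}_C$ with $\mathcal{E}_K(t)=\frac1N\sum_{k=1}^N\|v_k(t)\|^2$ and $\mathcal{E}_C(t)=\frac{\sigma}{2N^2}\sum_{k,l=1}^N\|x_k(t)-x_l(t)\|^2$. *)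

theory Defs
  imports "HOL-Analysis.Analysis"
begin

definition outer3 :: "real^3 \<Rightarrow> real^3 \<Rightarrow> real^3^3" where
  "outer3 a b = (\<chi> i j. a $ i * b $ j)"

definition Rmat :: "real^3 \<Rightarrow> real^3 \<Rightarrow> real^3^3" where
  "Rmat x1 x2 =
     (if x1 = x2 then mat 1
      else (let u = (1 / norm (cross3 x1 x2)) *\<^sub>R cross3 x1 x2 in
            (x1 \<bullet> x2) *\<^sub>R mat 1 - outer3 x1 x2 + outer3 x2 x1
            + (1 - x1 \<bullet> x2) *\<^sub>R outer3 u u))"

definition align_term :: "real^3 \<Rightarrow> real^3 \<Rightarrow> real^3 \<Rightarrow> real^3 \<Rightarrow> real^3" where
  "align_term xj xi vj vi = (if xj = - xi then 0 else Rmat xj xi *v vj - vi)"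

definition energy :: "real \<Rightarrow> ('i::finite \<Rightarrow> real^3) \<Rightarrow> ('i \<Rightarrow> real^3) \<Rightarrow> real" where
  "energy \<sigma> x v =
     (1 / real CARD('i)) * (\<Sum>k\<in>UNIV. (norm (v k))^2)
     + \<sigma> / (2 * (real CARD('i))^2) * (\<Sum>k\<in>UNIV. \<Sum>l\<in>UNIV. (norm (x k - x l))^2)"

end

theory Submission
  imports Defs
begin


lemma outer3_mv: "outer3 a b *v w = (b \<bullet> w) *\<^sub>R a"
  by (simp add: vec_eq_iff outer3_def matrix_vector_mult_def inner_vec_def sum_3 algebra_simps)

lemma mv_distribs:
  "(A + B) *v w = A *v w + B *v w" "(A - B) *v w = A *v w - B *v w"
  "(c *\<^sub>R A) *v w = c *\<^sub>R (A *v w)" for A B :: "real^3^3"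
  by (simp_all add: vec_eq_iff matrix_vector_mult_def sum.distrib sum_subtractf sum_distrib_left algebra_simps)

lemma Rmat_mv:
  assumes "a \<noteq> b"
  shows "Rmat a b *v w = (a \<bullet> b) *\<^sub>R w - (b \<bullet> w) *\<^sub>R a + (a \<bullet> w) *\<^sub>R b
     + ((1 - a \<bullet> b) * ((1 / norm (cross3 a b) * (cross3 a b \<bullet> w)) / norm (cross3 a b))) *\<^sub>R cross3 a b"
  using assms by (simp add: Rmat_def Let_def mv_distribs outer3_mv inner_commute)

lemma inner_Rmat: "b \<bullet> (Rmat a b *v w) = (if a = b then b \<bullet> w else (b \<bullet> b) * (a \<bullet> w))"
proof (cases "a = b")
  case True then show ?thesis by (simp add: Rmat_def)
next
  case False
  have "b \<bullet> cross3 a b = 0" by (simp add: dot_cross_self)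
  then show ?thesis using False by (simp add: Rmat_mv inner_add_right inner_diff_right algebra_simps inner_commute)
qed

lemma gram3: "((cross3 a b) \<bullet> v)^2 = (a\<bullet>a)*(b\<bullet>b)*(v\<bullet>v) + 2*(a\<bullet>b)*(b\<bullet>v)*(v\<bullet>a)
   - (a\<bullet>a)*(b\<bullet>v)^2 - (b\<bullet>b)*(a\<bullet>v)^2 - (v\<bullet>v)*(a\<bullet>b)^2"
  unfolding cross3_def inner_vec_def sum_3 by (simp add: power2_eq_square; algebra)

lemma norm_Rmat:
  assumes a: "norm a = 1" and b: "norm b = 1" and ab: "a \<noteq> - b" and av: "a \<bullet> v = 0"
  shows "norm (Rmat a b *v v) = norm v"
proof (cases "a = b")
  case True then show ?thesis by (simp add: Rmat_def)
next
  case False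
  define w where "w = cross3 a b"
  define c where "c = a \<bullet> b"
  define q where "q = b \<bullet> v"
  define n where "n = norm w"
  have aa: "a \<bullet> a = 1" using a by (metis norm_eq_1)
  have bb: "b \<bullet> b = 1" using b by (metis norm_eq_1)
  have n2: "n^2 = 1 - c^2" using norm_cross[of a b] a b by (simp add: n_def w_def c_def)
  have ww: "w \<bullet> w = n^2" by (simp add: n_def power2_norm_eq_inner)
  have "n \<noteq> 0"
  proof
    assume "n = 0"
    then have "c^2 = 1" using n2 by simp
    then have "c = 1 \<or> c = -1" by (metis power2_eq_1_iff)
    moreover have "(norm (a - b))^2 = 2 - 2*c" "(norm (a + b))^2 = 2 + 2*c"
      by (simp_all add: power2_norm_eq_inner inner_diff_left inner_diff_right inner_add_left inner_add_right aa bb c_def inner_commute)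
    ultimately have "norm (a - b) = 0 \<or> norm (a + b) = 0" by auto
    then show False using False ab by (auto simp: minus_equation_iff eq_neg_iff_add_eq_0)
  qed
  define k where "k = (1 - c) * ((1 / n * (w \<bullet> v)) / n)"
  have Rv: "Rmat a b *v v = c *\<^sub>R v - q *\<^sub>R a + k *\<^sub>R w"
    using Rmat_mv[OF False, of v] av by (simp add: k_def n_def w_def c_def q_def)
  have aw: "a \<bullet> w = 0" by (simp add: w_def dot_cross_self)
  have gr: "(w \<bullet> v)^2 = (v \<bullet> v) - q^2 - (v \<bullet> v) * c^2"
    using gram3[of a b v] aa bb av by (simp add: w_def c_def q_def inner_commute)
  have e1: "(Rmat a b *v v) \<bullet> (Rmat a b *v v) = c^2 * (v \<bullet> v) + q^2 + k^2 * (w \<bullet> w) + 2*c*k*(v \<bullet> w)"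
    unfolding Rv using aa aw av
    by (simp add: inner_add_left inner_add_right inner_diff_left inner_diff_right inner_commute power2_eq_square algebra_simps q_def)
  have e2: "k^2 * (w \<bullet> w) + 2*c*k*(v \<bullet> w) = (1 - c^2) * (w \<bullet> v)^2 / n^2"
    using \<open>n \<noteq> 0\<close> unfolding ww k_def by (simp add: field_simps power2_eq_square inner_commute) 
  have e3: "(1 - c^2) * (w \<bullet> v)^2 / n^2 = (w \<bullet> v)^2" using n2 \<open>n \<noteq> 0\<close> by (simp add: field_simps) (metis distrib_right mult_1)
  have "(Rmat a b *v v) \<bullet> (Rmat a b *v v) = v \<bullet> v"
    using gr e1 e2 e3 by (simp add: algebra_simps)
  then show ?thesis by (simp add: norm_eq_sqrt_inner)
qed

lemma dec_lemma:
  fixes f :: "real \<Rightarrow> real"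
  assumes ab: "a \<le> b"
    and d: "\<And>s. s \<in> {a..b} \<Longrightarrow> (f has_real_derivative f' s) (at s within {a..})"
    and n: "\<And>s. s \<in> {a..b} \<Longrightarrow> f' s \<le> 0"
  shows "f b \<le> f a"
proof (rule DERIV_nonpos_imp_decreasing_open[OF ab])
  fix s assume s: "a < s" "s < b"
  have "at s within {a..} = at s"
    by (rule at_within_interior) (use s in simp)
  then show "\<exists>y. (f has_real_derivative y) (at s) \<and> y \<le> 0"
    using d[of s] n[of s] s by auto
next
  show "continuous_on {a..b} f"
    unfolding continuous_on_eq_continuous_within
  proof
    fix s assume s: "s \<in> {a..b}"
    have "(f has_real_derivative f' s) (at s within {a..b})"
      by (rule has_field_derivative_subset[OF d[OF s]]) auto
    then show "continuous (at s within {a..b}) f" by (rule DERIV_continuous)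
  qed
qed

lemma inner_vd:
  assumes "(f has_vector_derivative f') (at t within S)" "(g has_vector_derivative g') (at t within S)"
  shows "((\<lambda>s. f s \<bullet> g s) has_real_derivative (f t \<bullet> g' + f' \<bullet> g t)) (at t within S)"
  using bounded_bilinear.has_vector_derivative[OF bounded_bilinear_inner assms]
  by (simp add: has_real_derivative_iff_has_vector_derivative)

lemma normsq_vd:
  assumes "(f has_vector_derivative f') (at t within S)"
  shows "((\<lambda>s. (norm (f s))^2) has_real_derivative (2 * (f t \<bullet> f'))) (at t within S)"
  using inner_vd[OF assms assms] by (simp add: power2_norm_eq_inner inner_commute)

lemma xA_bound:
  "\<bar>xi \<bullet> align_term xj xi vj vi\<bar> \<le> (xi \<bullet> xi + 1) * \<bar>xj \<bullet> vj\<bar> + \<bar>xi \<bullet> vi\<bar>"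
proof -
  have p: "0 \<le> xi \<bullet> xi" by simp
  show ?thesis
  proof (cases "xj = - xi")
    case True then show ?thesis using p by (simp add: align_term_def)
  next
    case False
    then have e: "xi \<bullet> align_term xj xi vj vi = (if xj = xi then xj \<bullet> vj else (xi \<bullet> xi) * (xj \<bullet> vj)) - xi \<bullet> vi"
      by (simp add: align_term_def inner_diff_right inner_Rmat)
    have "\<bar>(xi \<bullet> xi) * (xj \<bullet> vj)\<bar> \<le> (xi \<bullet> xi + 1) * \<bar>xj \<bullet> vj\<bar>"
      using p by (simp add: abs_mult mult_right_mono)
    moreover have "\<bar>xj \<bullet> vj\<bar> \<le> (xi \<bullet> xi + 1) * \<bar>xj \<bullet> vj\<bar>"
      using p by (simp add: algebra_simps)
    ultimately show ?thesis unfolding e by (auto intro: order_trans[OF abs_triangle_ineq4])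
  qed
qed

definition Fld :: "('i::finite \<Rightarrow> real \<Rightarrow> real^3) \<Rightarrow> ('i \<Rightarrow> real \<Rightarrow> real^3) \<Rightarrow> ('i \<Rightarrow> 'i \<Rightarrow> real \<Rightarrow> real) \<Rightarrow> real \<Rightarrow> 'i \<Rightarrow> real \<Rightarrow> real^3" where
  "Fld x v \<psi> \<sigma> i t =
              (- ((norm (v i t))^2 / (norm (x i t))^2) *\<^sub>R x i t
               + (\<Sum>j\<in>UNIV. (\<psi> i j t / real CARD('i)) *\<^sub>R
                                 align_term (x j t) (x i t) (v j t) (v i t))
               + (\<Sum>k\<in>UNIV. (\<sigma> / real CARD('i)) *\<^sub>R
                   ((norm (x i t))^2 *\<^sub>R x k t - (x i t \<bullet> x k t) *\<^sub>R x i t)))"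

lemma x_Fld:
  fixes x v :: "'i::finite \<Rightarrow> real \<Rightarrow> real^3"
  shows "x i t \<bullet> Fld x v \<psi> \<sigma> i t = (if x i t = 0 then 0 else - (v i t \<bullet> v i t))
     + (\<Sum>j\<in>UNIV. \<psi> i j t / real CARD('i) * (x i t \<bullet> align_term (x j t) (x i t) (v j t) (v i t)))"
  by (simp add: Fld_def inner_add_right inner_diff_right inner_sum_right power2_norm_eq_inner)

lemma v_Fld:
  fixes x v :: "'i::finite \<Rightarrow> real \<Rightarrow> real^3"
  assumes "norm (x i t) = 1" "x i t \<bullet> v i t = 0"
  shows "v i t \<bullet> Fld x v \<psi> \<sigma> i t =
     (\<Sum>j\<in>UNIV. \<psi> i j t / real CARD('i) * (v i t \<bullet> align_term (x j t) (x i t) (v j t) (v i t)))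
     + (\<Sum>k\<in>UNIV. \<sigma> / real CARD('i) * (v i t \<bullet> x k t))"
  using assms by (simp add: Fld_def inner_add_right inner_diff_right inner_sum_right inner_commute)



lemma invariant:
  fixes x v :: "'i::finite \<Rightarrow> real \<Rightarrow> real^3"
    and \<psi> :: "'i \<Rightarrow> 'i \<Rightarrow> real \<Rightarrow> real"
    and \<sigma> :: real
  assumes psi_nonneg: "\<And>i j t. \<psi> i j t \<ge> 0"
    and psi_bounded: "\<exists>M. \<forall>i j t. \<psi> i j t \<le> M"
    and dx: "\<And>i t. t \<ge> 0 \<Longrightarrow> (x i has_vector_derivative v i t) (at t within {0..})"
    and dv: "\<And>i t. t \<ge> 0 \<Longrightarrow> (v i has_vector_derivative Fld x v \<psi> \<sigma> i t) (at t within {0..})"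
    and init_norm: "\<And>i. norm (x i 0) = 1"
    and init_tang: "\<And>i. v i 0 \<bullet> x i 0 = 0"
    and T: "T \<ge> 0"
  shows "norm (x i T) = 1 \<and> x i T \<bullet> v i T = 0"
proof -
  obtain M where M: "\<And>i j t. \<psi> i j t \<le> M" using psi_bounded by blast
  have M0: "0 \<le> M" using M[of i i 0] psi_nonneg[of i i 0] by linarith
  have cx: "continuous_on {0..T} (x i)" for i
    by (rule continuous_on_vector_derivative, rule has_vector_derivative_within_subset[OF dx]) auto
  have cv: "continuous_on {0..T} (v i)" for i
    by (rule continuous_on_vector_derivative, rule has_vector_derivative_within_subset[OF dv]) auto
  have "continuous_on {0..T} (\<lambda>s. \<Sum>i\<in>UNIV. norm (x i s) + norm (v i s))"
    by (intro continuous_on_sum continuous_on_add continuous_on_norm cx cv)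
  then have "bounded ((\<lambda>s. \<Sum>i\<in>UNIV. norm (x i s) + norm (v i s)) ` {0..T})"
    by (intro compact_imp_bounded compact_continuous_image) auto
  then obtain B0 where B0': "\<forall>y\<in>(\<lambda>s. \<Sum>i\<in>UNIV. norm (x i s) + norm (v i s)) ` {0..T}. norm y \<le> B0"
    unfolding bounded_iff by blast
  have B0: "\<And>s. s \<in> {0..T} \<Longrightarrow> norm (\<Sum>i\<in>UNIV. norm (x i s) + norm (v i s)) \<le> B0"
    using B0' by blast
  define B where "B = max B0 1"
  have B1: "1 \<le> B" by (simp add: B_def)
  have xvB: "norm (x i s) \<le> B \<and> norm (v i s) \<le> B" if s: "s \<in> {0..T}" for i s
  proof -
    have "norm (x i s) + norm (v i s) \<le> (\<Sum>i\<in>UNIV. norm (x i s) + norm (v i s))"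
      by (rule member_le_sum) auto
    also have "\<dots> \<le> B0" using B0[OF s] by simp
    finally show ?thesis unfolding B_def using norm_ge_zero[of "x i s"] norm_ge_zero[of "v i s"] by linarith
  qed
  have xxB: "x i s \<bullet> x i s \<le> B^2" and vvB: "v i s \<bullet> v i s \<le> B^2" and xvB2: "\<bar>x i s \<bullet> v i s\<bar> \<le> B^2"
    if s: "s \<in> {0..T}" for i s
  proof -
    show "x i s \<bullet> x i s \<le> B^2" using xvB[OF s, of i]
      by (simp add: power2_norm_eq_inner[symmetric] power_mono)
    show "v i s \<bullet> v i s \<le> B^2" using xvB[OF s, of i]
      by (simp add: power2_norm_eq_inner[symmetric] power_mono)
    have "\<bar>x i s \<bullet> v i s\<bar> \<le> norm (x i s) * norm (v i s)" by (rule Cauchy_Schwarz_ineq2)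
    also have "\<dots> \<le> B * B" using xvB[OF s, of i] B1 by (intro mult_mono) auto
    finally show "\<bar>x i s \<bullet> v i s\<bar> \<le> B^2" by (simp add: power2_eq_square)
  qed
  define N where "N = real CARD('i)"
  have N1: "1 \<le> N" unfolding N_def by (simp add: Suc_le_eq)
  define a where "a = (\<lambda>i s. x i s \<bullet> x i s - 1)"
  define b where "b = (\<lambda>i s. x i s \<bullet> v i s)"
  define b' where "b' = (\<lambda>i s. v i s \<bullet> v i s + x i s \<bullet> Fld x v \<psi> \<sigma> i s)"
  define L where "L = (\<lambda>s. \<Sum>i\<in>UNIV. (a i s)^2 + (b i s)^2)"
  define L' where "L' = (\<lambda>s. \<Sum>i\<in>UNIV. 2 * a i s * (2 * b i s) + 2 * b i s * b' i s)"
  define K where "K = N * (2 + 2 * B^4 + 2 * N * M * (B^2 + 2))"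
  have dL: "(L has_real_derivative L' s) (at s within {0..})" if s: "s \<ge> 0" for s
  proof -
    have da: "(a i has_real_derivative 2 * b i s) (at s within {0..})" for i
    proof -
      have "((\<lambda>s. x i s \<bullet> x i s - 1) has_real_derivative (x i s \<bullet> v i s + v i s \<bullet> x i s) - 0) (at s within {0..})"
        by (intro DERIV_diff inner_vd dx s DERIV_const)
      then show ?thesis by (simp add: a_def b_def inner_commute)
    qed
    have db: "(b i has_real_derivative b' i s) (at s within {0..})" for i
    proof -
      have "((\<lambda>s. x i s \<bullet> v i s) has_real_derivative (x i s \<bullet> Fld x v \<psi> \<sigma> i s + v i s \<bullet> v i s)) (at s within {0..})"
        by (intro inner_vd dx dv s)
      then show ?thesis by (simp add: b'_def b_def add.commute)
    qed
    show ?thesis unfolding L_def L'_def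
      by (rule DERIV_sum) (rule derivative_eq_intros da db refl | simp)+
  qed
  have bound: "L' s \<le> K * L s" if s: "s \<in> {0..T}" for s
  proof -
    have L0: "0 \<le> L s" unfolding L_def by (intro sum_nonneg) auto
    have abL: "(a i s)^2 + (b i s)^2 \<le> L s" for i unfolding L_def by (rule member_le_sum) auto
    have bL: "(b i s)^2 \<le> L s" for i using abL[of i] zero_le_power2[of "a i s"] by linarith
    have bbL: "\<bar>b i s\<bar> * \<bar>b j s\<bar> \<le> L s" for i j
    proof -
      have "0 \<le> (\<bar>b i s\<bar> - \<bar>b j s\<bar>)^2" by simp
      then have "2 * (\<bar>b i s\<bar> * \<bar>b j s\<bar>) \<le> (b i s)^2 + (b j s)^2"
        by (simp add: power2_diff power2_abs)
      then show ?thesis using bL[of i] bL[of j] by linarith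
    qed
    have bB: "\<bar>b i s\<bar> \<le> B^2" for i using xvB2[OF s] by (simp add: b_def)
    have b'eq: "b' i s = (if x i s = 0 then v i s \<bullet> v i s else 0)
       + (\<Sum>j\<in>UNIV. \<psi> i j s / N * (x i s \<bullet> align_term (x j s) (x i s) (v j s) (v i s)))" for i
      by (simp add: b'_def x_Fld N_def)
    define C where "C = 2 + 2*B^4 + N * (2*M*(B^2+2))"
    have per: "2 * a i s * (2 * b i s) + 2 * b i s * b' i s \<le> C * L s" for i
    proof -
      have "0 \<le> (a i s - b i s)^2" by simp
      then have t1: "2 * a i s * (2 * b i s) \<le> 2 * L s"
        using abL[of i] by (simp add: power2_diff)
      have t2: "2 * b i s * (if x i s = 0 then v i s \<bullet> v i s else 0) \<le> 2 * B^4 * L s"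
      proof (cases "x i s = 0")
        case True
        then have "a i s = -1" by (simp add: a_def)
        then have "1 + (b i s)^2 \<le> L s" using abL[of i] by simp
        moreover have "0 \<le> (b i s)^2" by simp
        ultimately have L1: "1 \<le> L s" by linarith
        have vv0: "0 \<le> v i s \<bullet> v i s" by simp
        have "b i s * (v i s \<bullet> v i s) \<le> \<bar>b i s\<bar> * (v i s \<bullet> v i s)"
          using vv0 by (simp add: mult_right_mono)
        also have "\<dots> \<le> B^2 * B^2" using bB[of i] vvB[OF s, of i] vv0 by (intro mult_mono) auto
        also have "\<dots> = B^4 * 1" by (simp add: power2_eq_square power4_eq_xxxx)
        also have "\<dots> \<le> B^4 * L s" using L1 by (intro mult_left_mono) auto
        finally show ?thesis using True by simp
      next
        case False then show ?thesis using L0 by simp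
      qed
      have t3: "2 * b i s * (\<Sum>j\<in>UNIV. \<psi> i j s / N * (x i s \<bullet> align_term (x j s) (x i s) (v j s) (v i s)))
                 \<le> N * (2*M*(B^2+2)) * L s"
      proof -
        have "2 * b i s * (\<Sum>j\<in>UNIV. \<psi> i j s / N * (x i s \<bullet> align_term (x j s) (x i s) (v j s) (v i s)))
           = (\<Sum>j\<in>UNIV. 2 * b i s * (\<psi> i j s / N * (x i s \<bullet> align_term (x j s) (x i s) (v j s) (v i s))))"
          by (simp add: sum_distrib_left)
        also have "\<dots> \<le> of_nat (card (UNIV::'i set)) * (2*M*(B^2+2) * L s)"
        proof (rule sum_bounded_above)
          fix j :: 'i
          have pN: "\<psi> i j s / N \<le> M" using M[of i j s] psi_nonneg[of i j s] N1
          proof -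
            have "\<psi> i j s / N \<le> \<psi> i j s / 1"
              using N1 psi_nonneg[of i j s] by (intro divide_left_mono) auto
            then show ?thesis using M[of i j s] by simp
          qed
          have pN0: "0 \<le> \<psi> i j s / N" using psi_nonneg[of i j s] N1 by simp
          have cb: "\<bar>x i s \<bullet> align_term (x j s) (x i s) (v j s) (v i s)\<bar> \<le> (B^2 + 1) * \<bar>b j s\<bar> + \<bar>b i s\<bar>"
          proof -
            have "\<bar>x i s \<bullet> align_term (x j s) (x i s) (v j s) (v i s)\<bar> \<le> (x i s \<bullet> x i s + 1) * \<bar>b j s\<bar> + \<bar>b i s\<bar>"
              using xA_bound by (simp add: b_def)
            also have "\<dots> \<le> (B^2 + 1) * \<bar>b j s\<bar> + \<bar>b i s\<bar>"
              using xxB[OF s, of i] by (simp add: mult_right_mono)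
            finally show ?thesis .
          qed
          have "2 * b i s * (\<psi> i j s / N * (x i s \<bullet> align_term (x j s) (x i s) (v j s) (v i s)))
              \<le> 2 * \<bar>b i s\<bar> * (\<psi> i j s / N * \<bar>x i s \<bullet> align_term (x j s) (x i s) (v j s) (v i s)\<bar>)"
          proof -
            have gen: "2*bb*(p*c) \<le> 2*\<bar>bb\<bar>*(p*\<bar>c\<bar>)" if "0 \<le> p" for bb p c :: real
            proof -
              have "2*bb*(p*c) \<le> \<bar>2*bb*(p*c)\<bar>" by (rule abs_ge_self)
              also have "\<dots> = 2*\<bar>bb\<bar>*(p*\<bar>c\<bar>)" using that by (simp add: abs_mult)
              finally show ?thesis .
            qed
            show ?thesis by (rule gen[OF pN0])
          qed
          also have "\<dots> \<le> 2 * \<bar>b i s\<bar> * (M * ((B^2 + 1) * \<bar>b j s\<bar> + \<bar>b i s\<bar>))"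
            using pN pN0 cb M0 by (intro mult_left_mono mult_mono) auto
          also have "\<dots> = 2 * M * ((B^2 + 1) * (\<bar>b i s\<bar> * \<bar>b j s\<bar>) + (b i s)^2)"
            by (simp add: algebra_simps power2_eq_square)
          also have "\<dots> \<le> 2 * M * ((B^2 + 1) * L s + L s)"
            using bbL[of i j] bL[of i] M0 by (intro mult_left_mono add_mono) auto
          also have "\<dots> = 2*M*(B^2+2) * L s" by (simp add: algebra_simps)
          finally show "2 * b i s * (\<psi> i j s / N * (x i s \<bullet> align_term (x j s) (x i s) (v j s) (v i s)))
              \<le> 2*M*(B^2+2) * L s" .
        qed
        also have "\<dots> = N * (2*M*(B^2+2)) * L s" by (simp add: N_def)
        finally show ?thesis .
      qed
      have "2 * a i s * (2 * b i s) + 2 * b i s * b' i s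
          = 2 * a i s * (2 * b i s) + 2 * b i s * (if x i s = 0 then v i s \<bullet> v i s else 0)
            + 2 * b i s * (\<Sum>j\<in>UNIV. \<psi> i j s / N * (x i s \<bullet> align_term (x j s) (x i s) (v j s) (v i s)))"
        by (simp add: b'eq algebra_simps)
      also have "\<dots> \<le> 2 * L s + 2 * B^4 * L s + N * (2*M*(B^2+2)) * L s"
        using t1 t2 t3 by linarith
      also have "\<dots> = C * L s" by (simp add: C_def algebra_simps)
      finally show ?thesis .
    qed
    have "L' s \<le> of_nat (card (UNIV::'i set)) * (C * L s)"
      unfolding L'_def by (rule sum_bounded_above) (use per in auto)
    then show ?thesis by (simp add: K_def C_def N_def algebra_simps)
  qed
  define g where "g = (\<lambda>s. exp (- K * s) * L s)"
  have dg: "(g has_real_derivative exp (- K * s) * (L' s - K * L s)) (at s within {0..})" if "s \<ge> 0" for s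
  proof -
    have e: "((\<lambda>s. exp (- K * s)) has_real_derivative exp (- K * s) * (- K)) (at s within {0..})"
      by (rule derivative_eq_intros refl)+ simp
    show ?thesis unfolding g_def
      using DERIV_mult[OF e dL[OF that]] by (simp add: algebra_simps)
  qed
  have "g T \<le> g 0"
  proof (rule dec_lemma[OF T])
    fix s assume s: "s \<in> {0..T}"
    then show "(g has_real_derivative exp (- K * s) * (L' s - K * L s)) (at s within {0..})" using dg by auto
    show "exp (- K * s) * (L' s - K * L s) \<le> 0" using bound[OF s]
      by (simp add: mult_nonpos_nonneg mult_nonneg_nonpos)
  qed
  moreover have "L 0 = 0"
    using init_norm init_tang by (simp add: L_def a_def b_def power2_norm_eq_inner[symmetric] inner_commute)
  ultimately have "L T \<le> 0" by (simp add: g_def mult_le_0_iff)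
  moreover have "(a i T)^2 + (b i T)^2 \<le> L T" unfolding L_def
    by (rule member_le_sum) auto
  ultimately have "(a i T)^2 = 0" "(b i T)^2 = 0"
    using zero_le_power2[of "a i T"] zero_le_power2[of "b i T"] by linarith+
  then have "a i T = 0" "b i T = 0" by simp_all
  then show ?thesis by (simp add: a_def b_def norm_eq_sqrt_inner)
qed



lemma energy_deriv:
  fixes x v :: "'i::finite \<Rightarrow> real \<Rightarrow> real^3"
    and \<psi> :: "'i \<Rightarrow> 'i \<Rightarrow> real \<Rightarrow> real"
    and \<sigma> :: real
  assumes psi_sym: "\<And>i j t. \<psi> i j t = \<psi> j i t"
    and dx: "\<And>i t. t \<ge> 0 \<Longrightarrow> (x i has_vector_derivative v i t) (at t within {0..})"
    and dv: "\<And>i t. t \<ge> 0 \<Longrightarrow> (v i has_vector_derivative Fld x v \<psi> \<sigma> i t) (at t within {0..})"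
    and t: "t \<ge> 0"
    and inv1: "\<And>i. norm (x i t) = 1" and inv2: "\<And>i. x i t \<bullet> v i t = 0"
  shows "((\<lambda>s. energy \<sigma> (\<lambda>k. x k s) (\<lambda>k. v k s)) has_real_derivative
             - (\<Sum>i\<in>UNIV. \<Sum>j\<in>UNIV. \<psi> i j t / (real CARD('i))^2 *
                  (norm (align_term (x j t) (x i t) (v j t) (v i t)))^2))
             (at t within {0..})"
proof -
  define N where "N = real CARD('i)"
  have N0: "0 < N" by (simp add: N_def)
  define D where "D = 1 / N * (\<Sum>k\<in>UNIV. 2 * (v k t \<bullet> Fld x v \<psi> \<sigma> k t))
     + \<sigma> / (2 * N^2) * (\<Sum>k\<in>UNIV. \<Sum>l\<in>UNIV. 2 * ((x k t - x l t) \<bullet> (v k t - v l t)))"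
  have d: "((\<lambda>s. energy \<sigma> (\<lambda>k. x k s) (\<lambda>k. v k s)) has_real_derivative D) (at t within {0..})"
    unfolding energy_def D_def N_def
    by (intro DERIV_add DERIV_cmult DERIV_sum normsq_vd has_vector_derivative_diff dx dv t)
  define A where "A = (\<lambda>i j. align_term (x j t) (x i t) (v j t) (v i t))"
  define S1 where "S1 = (\<Sum>i\<in>UNIV. \<Sum>j\<in>UNIV. \<psi> i j t * (v i t \<bullet> A i j))"
  define S2 where "S2 = (\<Sum>i\<in>UNIV. \<Sum>k\<in>UNIV. v i t \<bullet> x k t)"
  define S3 where "S3 = (\<Sum>i\<in>UNIV. \<Sum>j\<in>UNIV. \<psi> i j t * (norm (A i j))^2)"
  have pt: "2 * (v i t \<bullet> A i j) + (norm (A i j))^2 =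
      (if x j t = - x i t then 0 else (norm (v j t))^2 - (norm (v i t))^2)" for i j
  proof (cases "x j t = - x i t")
    case True then show ?thesis by (simp add: A_def align_term_def)
  next
    case False
    have nr: "norm (Rmat (x j t) (x i t) *v v j t) = norm (v j t)"
      by (rule norm_Rmat) (use False inv1 inv2 in auto)
    have nr2: "(Rmat (x j t) (x i t) *v v j t) \<bullet> (Rmat (x j t) (x i t) *v v j t) = v j t \<bullet> v j t"
      using nr by (metis power2_norm_eq_inner)
    show ?thesis using False nr2
      by (simp add: A_def align_term_def power2_norm_eq_inner inner_diff_left inner_diff_right inner_commute)
  qed
  have c: "2 * S1 + S3 = 0"
  proof -
    define e where "e = (\<lambda>i j. if x j t = - x i t then 0 else (1::real))"
    have esym: "e i j = e j i" for i j by (auto simp: e_def minus_equation_iff)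
    have "2 * S1 + S3 = (\<Sum>i\<in>UNIV. \<Sum>j\<in>UNIV. \<psi> i j t * (2 * (v i t \<bullet> A i j) + (norm (A i j))^2))"
      by (simp add: S1_def S3_def sum_distrib_left sum.distrib[symmetric] algebra_simps)
    also have "\<dots> = (\<Sum>i\<in>UNIV. \<Sum>j\<in>UNIV. \<psi> i j t * e i j * (norm (v j t))^2 - \<psi> i j t * e i j * (norm (v i t))^2)"
      by (intro sum.cong refl) (subst pt, simp add: e_def algebra_simps)
    also have "\<dots> = (\<Sum>i\<in>UNIV. \<Sum>j\<in>UNIV. \<psi> i j t * e i j * (norm (v j t))^2)
                   - (\<Sum>i\<in>UNIV. \<Sum>j\<in>UNIV. \<psi> i j t * e i j * (norm (v i t))^2)"
      by (simp add: sum_subtractf)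
    also have "(\<Sum>i\<in>UNIV. \<Sum>j\<in>UNIV. \<psi> i j t * e i j * (norm (v j t))^2)
             = (\<Sum>j\<in>UNIV. \<Sum>i\<in>UNIV. \<psi> j i t * e j i * (norm (v j t))^2)"
      by (subst sum.swap) (simp add: psi_sym esym)
    finally show ?thesis by simp
  qed
  have b: "(\<Sum>k\<in>UNIV. \<Sum>l\<in>UNIV. 2 * ((x k t - x l t) \<bullet> (v k t - v l t))) = - 4 * S2"
  proof -
    have "(\<Sum>k\<in>UNIV. \<Sum>l\<in>UNIV. 2 * ((x k t - x l t) \<bullet> (v k t - v l t)))
        = (\<Sum>k\<in>UNIV. \<Sum>l\<in>UNIV. - 2 * (v l t \<bullet> x k t) - 2 * (v k t \<bullet> x l t))"
      using inv2 by (simp add: inner_diff_left inner_diff_right inner_commute algebra_simps)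
    also have "\<dots> = - 2 * (\<Sum>k\<in>UNIV. \<Sum>l\<in>UNIV. v l t \<bullet> x k t) - 2 * S2"
      by (simp add: S2_def sum_subtractf sum_distrib_left)
    also have "(\<Sum>k\<in>UNIV. \<Sum>l\<in>UNIV. v l t \<bullet> x k t) = S2"
      unfolding S2_def by (rule sum.swap)
    finally show ?thesis by simp
  qed
  have a: "(\<Sum>k\<in>UNIV. 2 * (v k t \<bullet> Fld x v \<psi> \<sigma> k t)) = 2 / N * S1 + 2 * \<sigma> / N * S2"
  proof -
    have "(\<Sum>k\<in>UNIV. 2 * (v k t \<bullet> Fld x v \<psi> \<sigma> k t))
       = (\<Sum>k\<in>UNIV. 2 * ((\<Sum>j\<in>UNIV. \<psi> k j t / N * (v k t \<bullet> A k j)) + (\<Sum>l\<in>UNIV. \<sigma> / N * (v k t \<bullet> x l t))))"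
      using v_Fld[of x k t v \<psi> \<sigma> for k] inv1 inv2 by (simp add: A_def N_def)
    also have "\<dots> = 2 / N * S1 + 2 * \<sigma> / N * S2"
      by (simp add: S1_def S2_def sum_distrib_left sum.distrib algebra_simps sum_divide_distrib)
    finally show ?thesis .
  qed
  have "D = - (\<Sum>i\<in>UNIV. \<Sum>j\<in>UNIV. \<psi> i j t / N^2 * (norm (A i j))^2)"
  proof -
    have "D = 2 / N^2 * S1"
      unfolding D_def a b using N0 by (simp add: field_simps power2_eq_square)
    also have "\<dots> = - S3 / N^2"
    proof -
      have "S3 = - 2 * S1" using c by linarith
      then show ?thesis by simp
    qed
    also have "\<dots> = - (\<Sum>i\<in>UNIV. \<Sum>j\<in>UNIV. \<psi> i j t / N^2 * (norm (A i j))^2)"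
      by (simp add: S3_def sum_divide_distrib)
    finally show ?thesis .
  qed
  then show ?thesis using d by (simp add: A_def N_def)
qed



theorem proposition3p3:
  fixes x v :: "'i::finite \<Rightarrow> real \<Rightarrow> real^3"
    and \<psi> :: "'i \<Rightarrow> 'i \<Rightarrow> real \<Rightarrow> real"
    and \<sigma> :: real
  assumes sigma: "\<sigma> \<ge> 0"
    and psi_nonneg: "\<And>i j t. \<psi> i j t \<ge> 0"
    and psi_bounded: "\<exists>M. \<forall>i j t. \<psi> i j t \<le> M"
    and psi_sym: "\<And>i j t. \<psi> i j t = \<psi> j i t"
    and dx: "\<And>i t. t \<ge> 0 \<Longrightarrow> (x i has_vector_derivative v i t) (at t within {0..})"
    and dv: "\<And>i t. t \<ge> 0 \<Longrightarrow> (v i has_vector_derivative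
              (- ((norm (v i t))^2 / (norm (x i t))^2) *\<^sub>R x i t
               + (\<Sum>j\<in>UNIV. (\<psi> i j t / real CARD('i)) *\<^sub>R
                                 align_term (x j t) (x i t) (v j t) (v i t))
               + (\<Sum>k\<in>UNIV. (\<sigma> / real CARD('i)) *\<^sub>R
                   ((norm (x i t))^2 *\<^sub>R x k t - (x i t \<bullet> x k t) *\<^sub>R x i t))))
              (at t within {0..})"
    and init_norm: "\<And>i. norm (x i 0) = 1"
    and init_tang: "\<And>i. v i 0 \<bullet> x i 0 = 0"
  shows "(\<forall>t\<ge>0. ((\<lambda>s. energy \<sigma> (\<lambda>k. x k s) (\<lambda>k. v k s)) has_real_derivative
             - (\<Sum>i\<in>UNIV. \<Sum>j\<in>UNIV. \<psi> i j t / (real CARD('i))^2 *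
                  (norm (align_term (x j t) (x i t) (v j t) (v i t)))^2))
             (at t within {0..}))
       \<and> (\<forall>t\<ge>0. Max (range (\<lambda>i. norm (v i t)))
                 \<le> sqrt (real CARD('i) * energy \<sigma> (\<lambda>k. x k 0) (\<lambda>k. v k 0)))"
proof -
  have dv': "\<And>i t. t \<ge> 0 \<Longrightarrow> (v i has_vector_derivative Fld x v \<psi> \<sigma> i t) (at t within {0..})"
    unfolding Fld_def by (rule dv)
  have inv: "norm (x i t) = 1 \<and> x i t \<bullet> v i t = 0" if "t \<ge> 0" for i t
    by (rule invariant[OF psi_nonneg psi_bounded dx dv' init_norm init_tang that])
  have dE: "((\<lambda>s. energy \<sigma> (\<lambda>k. x k s) (\<lambda>k. v k s)) has_real_derivative
             - (\<Sum>i\<in>UNIV. \<Sum>j\<in>UNIV. \<psi> i j t / (real CARD('i))^2 *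
                  (norm (align_term (x j t) (x i t) (v j t) (v i t)))^2))
             (at t within {0..})" if t: "t \<ge> 0" for t
    by (rule energy_deriv[OF psi_sym dx dv' t]) (use inv[OF t] in auto)
  have vb: "Max (range (\<lambda>i. norm (v i t))) \<le> sqrt (real CARD('i) * energy \<sigma> (\<lambda>k. x k 0) (\<lambda>k. v k 0))"
    if t: "t \<ge> 0" for t
  proof -
    define E where "E = (\<lambda>s. energy \<sigma> (\<lambda>k. x k s) (\<lambda>k. v k s))"
    define N where "N = real CARD('i)"
    have N0: "0 < N" by (simp add: N_def)
    have "E t \<le> E 0"
    proof (rule dec_lemma[of 0 t E])
      fix s :: real assume s: "s \<in> {0..t}"
      show "(E has_real_derivative - (\<Sum>i\<in>UNIV. \<Sum>j\<in>UNIV. \<psi> i j s / (real CARD('i))^2 *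
                  (norm (align_term (x j s) (x i s) (v j s) (v i s)))^2)) (at s within {0..})"
        unfolding E_def using dE s by auto
      show "- (\<Sum>i\<in>UNIV. \<Sum>j\<in>UNIV. \<psi> i j s / (real CARD('i))^2 *
                  (norm (align_term (x j s) (x i s) (v j s) (v i s)))^2) \<le> 0"
        using psi_nonneg by (simp add: sum_nonneg)
    qed (use t in auto)
    have "(norm (v i t))^2 \<le> N * E t" for i
    proof -
      have "(norm (v i t))^2 \<le> (\<Sum>k\<in>UNIV. (norm (v k t))^2)"
        by (rule member_le_sum) auto
      moreover have "0 \<le> \<sigma> / (2 * N^2) * (\<Sum>k\<in>UNIV. \<Sum>l\<in>UNIV. (norm (x k t - x l t))^2)"
        using sigma by (intro mult_nonneg_nonneg sum_nonneg) auto
      moreover have "N * E t = (\<Sum>k\<in>UNIV. (norm (v k t))^2)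
           + N * (\<sigma> / (2 * N^2) * (\<Sum>k\<in>UNIV. \<Sum>l\<in>UNIV. (norm (x k t - x l t))^2))"
        using N0 by (simp add: E_def energy_def N_def algebra_simps)
      ultimately show ?thesis using N0
        by (smt (verit) mult_nonneg_nonneg)
    qed
    then have "(norm (v i t))^2 \<le> N * E 0" for i
      using \<open>E t \<le> E 0\<close> N0 by (smt (verit) mult_left_mono)
    then have "norm (v i t) \<le> sqrt (N * E 0)" for i
      by (rule real_le_rsqrt)
    then show ?thesis
      by (subst Max_le_iff) (auto simp: E_def N_def)
  qed
  show ?thesis using dE vb by auto
qed


end
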